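(* Assume hypothesis (A). For every $i\in\{1,\dots,d\}$ and $s\in(-1,+\infty)$, the system of equations $$e^{\alpha^i}=1+s,\qquad e^{\alpha^j}=\sum_{k=1}^dp_{jk}e^{\alpha^k}+p_{j0},\quad j\in\{1,\dots,d\}\setminus\{i\},$$ in $\alpha=(\alpha^1,\dots,\alpha^d)\in\mathbb{R}^d$ has a unique solution $\alpha(s)$, given by $\alpha^i(s)=\log(1+s)$ and $\alpha^j(s)=\log(1+Q_{ji}s)$ for $j\ne i$. Moreover, for every $\Lambda\subset\{1,\dots,d\}$, $$R_\Lambda(\alpha(s))=\frac{s}{G_{ii}}\Bigl(\nu_i-\frac{\mu_i}{1+s}\mathbf{1}_\Lambda(i)\Bigr).$$
   Context: Jackson network with $d$ queues: arrival rates $\lambda_i\ge0$, service rates $\mu_i>0$, routing matrix $P=(p_{ij})_{i,j=1}^d$ nonnegative with $p_{ii}=0$, $\sum_jp_{ij}\le1$, $p_{i0}=1-\sum_jp_{ij}$. Hypothesis (A): the jump-rate kernel on $\mathbb{Z}^d$ (jumps $+\epsilon^i$ at rate $\lambda_i$, $-\epsilon^i$ at rate $\mu_ip_{i0}$, $\epsilon^j-\epsilon^i$ at rate $\mu_ip_{ij}$) is irreducible (equivalently spectral radius of $P$ $<1$ and for every $i$ some $\lambda_jp^{(n)}_{ji}>0$); then the traffic equations $\nu_j=\lambda_j+\sum_i\nu_ip_{ij}$ have a unique solution. $G=(I-P)^{-1}$. $Q_{ij}$: probability that the chain on $\{0,\dots,d\}$ with transitions $p_{ij}$ ($0$ absorbing)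 started at $i$ ever visits $j$ (time $0$ included). For $\Lambda\subset\{1,\dots,d\}$ and $\alpha\in\mathbb{R}^d$, $$R_\Lambda(\alpha)=\sum_{j=1}^d\lambda_j(e^{\alpha^j}-1)+\sum_{j\in\Lambda}\mu_j\Bigl(\sum_{k=1}^dp_{jk}e^{\alpha^k-\alpha^j}+p_{j0}e^{-\alpha^j}-1\Bigr).$$ *)

theory Defs
  imports "HOL-Analysis.Analysis"
begin

text \<open>Jackson network with queues indexed by a finite type 'n (d = CARD('n)).
  Routing matrix P :: real^'n^'n, p_ij = P$i$j; exit probability p_i0 below.\<close>

definition p0 :: "real^'n^'n \<Rightarrow> 'n::finite \<Rightarrow> real" where
  "p0 P i = 1 - (\<Sum>j\<in>UNIV. P$i$j)"

definition unitv :: "'n::finite \<Rightarrow> int^'n" where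
  "unitv i = (\<chi> k. if k = i then 1 else 0)"

definition pos_jumps :: "real^'n \<Rightarrow> real^'n \<Rightarrow> real^'n^'n \<Rightarrow> (int^'n::finite) set" where
  "pos_jumps lam mu P =
     {unitv i | i. lam$i > 0}
   \<union> {- unitv i | i. mu$i * p0 P i > 0}
   \<union> {unitv j - unitv i | i j. mu$i * P$i$j > 0}"

definition hypA :: "real^'n \<Rightarrow> real^'n \<Rightarrow> real^'n^'n \<Rightarrow> bool" where
  "hypA lam mu P \<longleftrightarrow>
     (\<forall>x y :: int^'n::finite. (x, y) \<in> {(u, u + v) | u v. v \<in> pos_jumps lam mu P}\<^sup>*)"

definition traffic :: "real^'n \<Rightarrow> real^'n \<Rightarrow> real^'n^'n::finite \<Rightarrow> bool" where
  "traffic nu lam P \<longleftrightarrow> (\<forall>j. nu$j = lam$j + (\<Sum>i\<in>UNIV. nu$i * P$i$j))"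

definition Gmat :: "real^'n^'n \<Rightarrow> real^'n^'n::finite" where
  "Gmat P = matrix_inv (mat 1 - P)"

text \<open>First-passage probabilities of the chain on {0,...,d} (0 absorbing) into j:
  first_pass P j n i = probability that the chain started at i visits j for the
  first time at time n.  (The absorbing state 0 is never j, so it contributes 0.)\<close>
fun first_pass :: "real^'n^'n \<Rightarrow> 'n::finite \<Rightarrow> nat \<Rightarrow> 'n \<Rightarrow> real" where
  "first_pass P j 0 i = (if i = j then 1 else 0)"
| "first_pass P j (Suc n) i =
     (if i = j then 0 else (\<Sum>k\<in>UNIV. P$i$k * first_pass P j n k))"

text \<open>Q_ij: probability that the chain started at i ever visits j (time 0 included).\<close>
definition Qprob :: "real^'n^'n \<Rightarrow> 'n::finite \<Rightarrow> 'n \<Rightarrow> real" where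
  "Qprob P i j = (\<Sum>n. first_pass P j n i)"

definition RLam :: "real^'n \<Rightarrow> real^'n \<Rightarrow> real^'n^'n \<Rightarrow> 'n::finite set \<Rightarrow> real^'n \<Rightarrow> real" where
  "RLam lam mu P Lam a =
     (\<Sum>j\<in>UNIV. lam$j * (exp (a$j) - 1))
   + (\<Sum>j\<in>Lam. mu$j * ((\<Sum>k\<in>UNIV. P$j$k * exp (a$k - a$j)) + p0 P j * exp (- a$j) - 1))"

end

theory Submission
  imports Defs
begin


lemma closed_contra:
  fixes lam mu :: "real^'n::finite" and P :: "real^'n^'n"
  assumes mu_pos: "\<forall>j. mu$j > 0"
    and A: "hypA lam mu P"
    and Sne: "i0 \<in> S"
    and cl: "\<forall>j\<in>S. p0 P j = 0 \<and> (\<forall>k. P$j$k > 0 \<longrightarrow> k \<in> S)"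
  shows False
proof -
  define f where "f = (\<lambda>x::int^'n. \<Sum>j\<in>S. x$j)"
  have fu: "f (unitv i) = (if i \<in> S then 1 else 0)" for i
    unfolding f_def unitv_def by (simp add: sum.delta)
  have fadd: "f (u + v) = f u + f v" for u v unfolding f_def by (simp add: sum.distrib)
  have fneg: "f (- v) = - f v" for v unfolding f_def by (simp add: sum_negf)
  have fdiff: "f (u - v) = f u - f v" for u v unfolding f_def by (simp add: sum_subtractf)
  have jump: "f v \<ge> 0" if "v \<in> pos_jumps lam mu P" for v
  proof -
    from that consider (a) i where "v = unitv i"
      | (b) i where "v = - unitv i" "mu$i * p0 P i > 0"
      | (c) i j where "v = unitv j - unitv i" "mu$i * P$i$j > 0"
      unfolding pos_jumps_def by blast
    then show ?thesis
    proof cases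
      case a then show ?thesis by (simp add: fu)
    next
      case (b i)
      have "p0 P i > 0" using b(2) mu_pos by (meson zero_less_mult_pos less_imp_le zero_less_mult_iff)
      then have "i \<notin> S" using cl by auto
      then show ?thesis using b by (simp add: fneg fu)
    next
      case (c i j)
      have "P$i$j > 0" using c(2) mu_pos by (simp add: zero_less_mult_iff) (meson not_less_iff_gr_or_eq)
      then show ?thesis using c cl by (auto simp: fdiff fu)
    qed
  qed
  have mono: "f x \<le> f y" if "(x, y) \<in> {(u, u + v) | u v. v \<in> pos_jumps lam mu P}\<^sup>*" for x y
    using that
  proof (induction rule: rtrancl_induct)
    case base then show ?case by simp
  next
    case (step y z)
    then obtain v where v: "v \<in> pos_jumps lam mu P" "z = y + v" by blast
    have "f v \<ge> 0" using jump v(1) .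
    then show ?case using step.IH v(2) by (simp add: fadd)
  qed
  have "f 0 \<le> f (- unitv i0)"
    using A unfolding hypA_def by (intro mono) blast
  moreover have "f 0 = 0" unfolding f_def by simp
  ultimately show False using Sne by (simp add: fneg fu)
qed

lemma max_principle:
  fixes lam mu z :: "real^'n::finite" and P :: "real^'n^'n"
  assumes mu_pos: "\<forall>j. mu$j > 0"
    and A: "hypA lam mu P"
    and P_nonneg: "\<forall>j k. P$j$k \<ge> 0"
    and P_sub: "\<forall>j. (\<Sum>k\<in>UNIV. P$j$k) \<le> 1"
    and zF: "\<forall>j\<in>F. z$j = 0"
    and harm: "\<forall>j. j \<notin> F \<longrightarrow> z$j = (\<Sum>k\<in>UNIV. P$j$k * z$k)"
  shows "z = 0"
proof (rule ccontr)
  assume nz: "z \<noteq> 0"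
  define M where "M = Max (range (\<lambda>j. \<bar>z$j\<bar>))"
  have Mge: "\<bar>z$j\<bar> \<le> M" for j unfolding M_def by (rule Max_ge) auto
  obtain i0 where i0: "\<bar>z$i0\<bar> = M" unfolding M_def
  proof -
    have "Max (range (\<lambda>j. \<bar>z$j\<bar>)) \<in> range (\<lambda>j. \<bar>z$j\<bar>)"
      by (rule Max_in) auto
    then show ?thesis using that unfolding M_def by (metis imageE)
  qed
  obtain j1 where "z$j1 \<noteq> 0" using nz by (metis vec_eq_iff zero_index)
  then have Mpos: "M > 0" using Mge[of j1] by linarith
  define S where "S = {j. \<bar>z$j\<bar> = M}"
  have "\<forall>j\<in>S. p0 P j = 0 \<and> (\<forall>k. P$j$k > 0 \<longrightarrow> k \<in> S)"
  proof
    fix j assume "j \<in> S"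
    then have zj: "\<bar>z$j\<bar> = M" by (simp add: S_def)
    then have "j \<notin> F" using zF Mpos by auto
    then have "M = \<bar>\<Sum>k\<in>UNIV. P$j$k * z$k\<bar>" using harm zj by simp
    also have "\<dots> \<le> (\<Sum>k\<in>UNIV. P$j$k * \<bar>z$k\<bar>)"
      by (rule order_trans[OF sum_abs]) (simp add: abs_mult P_nonneg)
    finally have le1: "M \<le> (\<Sum>k\<in>UNIV. P$j$k * \<bar>z$k\<bar>)" .
    have t: "(\<Sum>k\<in>UNIV. P$j$k * \<bar>z$k\<bar>) \<le> (\<Sum>k\<in>UNIV. P$j$k * M)"
      by (rule sum_mono) (simp add: mult_left_mono Mge P_nonneg)
    have "(\<Sum>k\<in>UNIV. P$j$k * M) = M * (\<Sum>k\<in>UNIV. P$j$k)"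
      by (simp add: sum_distrib_left mult.commute)
    also have "\<dots> \<le> M" using P_sub Mpos by (simp add: mult_le_cancel_left1)
    finally have le2: "(\<Sum>k\<in>UNIV. P$j$k * M) \<le> M" .
    have "M * (\<Sum>k\<in>UNIV. P$j$k) = M"
      using le1 t le2 \<open>(\<Sum>k\<in>UNIV. P$j$k * M) = M * (\<Sum>k\<in>UNIV. P$j$k)\<close> by linarith
    then have "(\<Sum>k\<in>UNIV. P$j$k) = 1" using Mpos by simp
    then have "p0 P j = 0" by (simp add: p0_def)
    moreover have "\<forall>k. P$j$k > 0 \<longrightarrow> k \<in> S"
    proof (intro allI impI)
      fix k assume pk: "P$j$k > 0"
      have "(\<Sum>k\<in>UNIV. P$j$k * (M - \<bar>z$k\<bar>)) = 0"
        using le1 t le2 by (simp add: sum_subtractf right_diff_distrib)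
      moreover have "\<forall>k\<in>UNIV. P$j$k * (M - \<bar>z$k\<bar>) \<ge> 0"
        using Mge P_nonneg by simp
      ultimately have "P$j$k * (M - \<bar>z$k\<bar>) = 0"
        using sum_nonneg_eq_0_iff[of UNIV "\<lambda>k. P$j$k * (M - \<bar>z$k\<bar>)"] by auto
      then show "k \<in> S" using pk by (simp add: S_def)
    qed
    ultimately show "p0 P j = 0 \<and> (\<forall>k. P$j$k > 0 \<longrightarrow> k \<in> S)" by blast
  qed
  moreover have "i0 \<in> S" using i0 by (simp add: S_def)
  ultimately show False using closed_contra[OF mu_pos A] by blast
qed

lemma fp_nonneg:
  assumes P_nonneg: "\<forall>j k. P$j$k \<ge> 0"
  shows "first_pass P i n j \<ge> 0"
  by (induction n arbitrary: j) (auto intro!: sum_nonneg mult_nonneg_nonneg simp: P_nonneg)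

lemma fp_partial:
  assumes P_nonneg: "\<forall>j k. P$j$k \<ge> 0"
    and P_sub: "\<forall>j. (\<Sum>k\<in>UNIV. P$j$k) \<le> 1"
  shows "(\<Sum>n<N. first_pass P i n j) \<le> 1"
proof (induction N arbitrary: j)
  case 0 then show ?case by simp
next
  case (Suc N)
  show ?case
  proof (cases "j = i")
    case True
    have "(\<Sum>n<Suc N. first_pass P i n j) = first_pass P i 0 j + (\<Sum>n<N. first_pass P i (Suc n) j)"
      by (rule sum.lessThan_Suc_shift)
    then show ?thesis using True by simp
  next
    case False
    have "(\<Sum>n<Suc N. first_pass P i n j) = first_pass P i 0 j + (\<Sum>n<N. first_pass P i (Suc n) j)"
      by (rule sum.lessThan_Suc_shift)
    also have "\<dots> = (\<Sum>n<N. \<Sum>k\<in>UNIV. P$j$k * first_pass P i n k)" using False by simp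
    also have "\<dots> = (\<Sum>k\<in>UNIV. P$j$k * (\<Sum>n<N. first_pass P i n k))"
      by (subst sum.swap) (simp add: sum_distrib_left)
    also have "\<dots> \<le> (\<Sum>k\<in>UNIV. P$j$k * 1)"
      by (rule sum_mono) (intro mult_left_mono Suc.IH, simp add: P_nonneg)
    also have "\<dots> \<le> 1" using P_sub by simp
    finally show ?thesis .
  qed
qed

lemma fp_summable:
  assumes P_nonneg: "\<forall>j k. P$j$k \<ge> 0"
    and P_sub: "\<forall>j. (\<Sum>k\<in>UNIV. P$j$k) \<le> 1"
  shows "summable (\<lambda>n. first_pass P i n j)"
  by (rule summableI_nonneg_bounded[where x=1]) (rule fp_nonneg[OF P_nonneg], rule fp_partial[OF assms])

lemma Q_bounds:
  assumes P_nonneg: "\<forall>j k. P$j$k \<ge> 0"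
    and P_sub: "\<forall>j. (\<Sum>k\<in>UNIV. P$j$k) \<le> 1"
  shows "0 \<le> Qprob P j i" "Qprob P j i \<le> 1"
  unfolding Qprob_def
  by (auto intro!: suminf_nonneg suminf_le_const fp_summable fp_nonneg fp_partial assms)

lemma Q_diag: "Qprob P i i = 1"
proof -
  have "(\<lambda>n. first_pass P i n i) = (\<lambda>n. if n = 0 then 1 else 0)"
    by (rule ext) (case_tac n, auto)
  then show ?thesis unfolding Qprob_def using sums_single[of 0 "\<lambda>_. 1::real"]
    by (simp add: sums_iff)
qed

lemma Q_harm:
  assumes P_nonneg: "\<forall>j k. P$j$k \<ge> 0"
    and P_sub: "\<forall>j. (\<Sum>k\<in>UNIV. P$j$k) \<le> 1"
    and ji: "j \<noteq> i"
  shows "Qprob P j i = (\<Sum>k\<in>UNIV. P$j$k * Qprob P k i)"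
proof -
  have sm: "summable (\<lambda>n. first_pass P i n j)" by (rule fp_summable[OF assms(1,2)])
  have "Qprob P j i = (\<Sum>n. first_pass P i (Suc n) j)"
    using suminf_split_head[OF sm] ji unfolding Qprob_def by simp
  also have "\<dots> = (\<Sum>n. \<Sum>k\<in>UNIV. P$j$k * first_pass P i n k)" using ji by simp
  also have "\<dots> = (\<Sum>k\<in>UNIV. \<Sum>n. P$j$k * first_pass P i n k)"
    by (rule suminf_sum) (intro summable_mult fp_summable assms)
  also have "\<dots> = (\<Sum>k\<in>UNIV. P$j$k * Qprob P k i)"
    unfolding Qprob_def by (intro sum.cong refl suminf_mult fp_summable assms)
  finally show ?thesis .
qed



theorem lemma4p1:
  fixes lam mu nu :: "real^'n::finite" and P :: "real^'n^'n" and i :: 'n and s :: real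
  assumes lam_nonneg: "\<forall>j. lam$j \<ge> 0"
    and mu_pos: "\<forall>j. mu$j > 0"
    and P_nonneg: "\<forall>j k. P$j$k \<ge> 0"
    and P_diag: "\<forall>j. P$j$j = 0"
    and P_sub: "\<forall>j. (\<Sum>k\<in>UNIV. P$j$k) \<le> 1"
    and A: "hypA lam mu P"
    and nu: "traffic nu lam P"
    and s: "s > -1"
  shows "(\<forall>a :: real^'n.
            (exp (a$i) = 1 + s \<and>
             (\<forall>j. j \<noteq> i \<longrightarrow> exp (a$j) = (\<Sum>k\<in>UNIV. P$j$k * exp (a$k)) + p0 P j))
            \<longleftrightarrow> a = (\<chi> j. if j = i then ln (1 + s) else ln (1 + Qprob P j i * s)))
       \<and> (\<forall>Lam.
            RLam lam mu P Lam (\<chi> j. if j = i then ln (1 + s) else ln (1 + Qprob P j i * s))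
            = s / (Gmat P)$i$i * (nu$i - mu$i / (1 + s) * indicator Lam i))"
proof -
  define Q where "Q = (\<lambda>j. Qprob P j i)"
  define al where "al = (\<chi> j. if j = i then ln (1 + s) else ln (1 + Qprob P j i * s))"
  have Qb: "0 \<le> Q j" "Q j \<le> 1" for j unfolding Q_def using Q_bounds[OF P_nonneg P_sub] by auto
  have Qi: "Q i = 1" unfolding Q_def by (rule Q_diag)
  have Qh: "Q j = (\<Sum>k\<in>UNIV. P$j$k * Q k)" if "j \<noteq> i" for j
    unfolding Q_def by (rule Q_harm[OF P_nonneg P_sub that])
  have pos: "1 + Q j * s > 0" for j
  proof (cases "s \<ge> 0")
    case True then show ?thesis using Qb[of j] mult_nonneg_nonneg[of "Q j" s] by linarith
  next
    case False
    then have "Q j * s \<ge> 1 * s" using Qb[of j] by (intro mult_right_mono_neg) auto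
    then show ?thesis using s by simp
  qed
  have E: "exp (al$j) = 1 + Q j * s" for j
    using pos[of j] Qi unfolding al_def Q_def by (auto simp: Q_def)
  have sumE: "(\<Sum>k\<in>UNIV. P$j$k * (1 + Q k * s)) + p0 P j = 1 + s * (\<Sum>k\<in>UNIV. P$j$k * Q k)" for j
    by (simp add: p0_def distrib_left sum.distrib sum_distrib_left algebra_simps)
  have part1: "(exp (a$i) = 1 + s \<and>
             (\<forall>j. j \<noteq> i \<longrightarrow> exp (a$j) = (\<Sum>k\<in>UNIV. P$j$k * exp (a$k)) + p0 P j))
            \<longleftrightarrow> a = al" for a
  proof
    assume H: "exp (a$i) = 1 + s \<and>
             (\<forall>j. j \<noteq> i \<longrightarrow> exp (a$j) = (\<Sum>k\<in>UNIV. P$j$k * exp (a$k)) + p0 P j)"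
    define z where "z = (\<chi> j. exp (a$j) - exp (al$j))"
    have "z = 0"
    proof (rule max_principle[OF mu_pos A P_nonneg P_sub, of "{i}"])
      show "\<forall>j\<in>{i}. z$j = 0" using H E Qi by (simp add: z_def)
      show "\<forall>j. j \<notin> {i} \<longrightarrow> z $ j = (\<Sum>k\<in>UNIV. P $ j $ k * z $ k)"
      proof (intro allI impI)
        fix j assume "j \<notin> {i}"
        then have ji: "j \<noteq> i" by simp
        have "z$j = (\<Sum>k\<in>UNIV. P$j$k * exp (a$k)) + p0 P j - (1 + Q j * s)"
          using H ji E by (simp add: z_def)
        also have "\<dots> = (\<Sum>k\<in>UNIV. P$j$k * exp (a$k)) + p0 P j
             - ((\<Sum>k\<in>UNIV. P$j$k * (1 + Q k * s)) + p0 P j)"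
          using sumE[of j] Qh[OF ji] by (simp add: mult.commute)
        also have "\<dots> = (\<Sum>k\<in>UNIV. P $ j $ k * z $ k)"
          by (simp add: z_def right_diff_distrib sum_subtractf E)
        finally show "z $ j = (\<Sum>k\<in>UNIV. P $ j $ k * z $ k)" .
      qed
    qed
    then have "exp (a$j) = exp (al$j)" for j by (simp add: z_def vec_eq_iff)
    then show "a = al" by (simp add: vec_eq_iff)
  next
    assume "a = al"
    then show "exp (a$i) = 1 + s \<and>
             (\<forall>j. j \<noteq> i \<longrightarrow> exp (a$j) = (\<Sum>k\<in>UNIV. P$j$k * exp (a$k)) + p0 P j)"
      using E Qi sumE Qh by (simp add: mult.commute)
  qed
  have Pv: "(P *v x)$j = (\<Sum>k\<in>UNIV. P$j$k * x$k)" for x :: "real^'n" and j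
    by (simp add: matrix_vector_mult_def)
  have "\<forall>x. (mat 1 - P) *v x = 0 \<longrightarrow> x = 0"
  proof (intro allI impI)
    fix x :: "real^'n" assume "(mat 1 - P) *v x = 0"
    moreover have "(mat 1 - P) *v x = x - P *v x" by (simp add: matrix_vector_mult_diff_rdistrib)
    ultimately have eq: "x = P *v x" by simp
    have "x$j = (\<Sum>k\<in>UNIV. P$j$k * x$k)" for j
    proof -
      have "x$j = (P *v x)$j" using arg_cong[where f="\<lambda>v. v$j", OF eq] by (simp only:)
      also have "\<dots> = (\<Sum>k\<in>UNIV. P$j$k * x$k)" by (rule Pv)
      finally show ?thesis .
    qed
    then have "\<forall>j. j \<notin> {} \<longrightarrow> x$j = (\<Sum>k\<in>UNIV. P$j$k * x$k)" by blast
    from max_principle[OF mu_pos A P_nonneg P_sub _ this] show "x = 0" by simp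
  qed
  then have "\<exists>B. B ** (mat 1 - P) = mat 1" by (simp add: matrix_left_invertible_ker)
  then have "invertible (mat 1 - P)" by (simp add: invertible_left_inverse)
  then have GG: "(mat 1 - P) ** Gmat P = mat 1"
    unfolding Gmat_def matrix_inv_def invertible_def by (rule someI_ex[THEN conjunct1])
  define G where "G = Gmat P"
  have Grow: "G$j$m - (\<Sum>k\<in>UNIV. P$j$k * G$k$m) = (if j = m then 1 else 0)" for j m
  proof -
    have "((mat 1 - P) ** G)$j$m = (if j = m then 1 else 0)" using GG by (simp add: G_def mat_def)
    then show ?thesis
      by (simp add: matrix_matrix_mult_def mat_def left_diff_distrib sum_subtractf
          if_distrib[of "\<lambda>x. x * _"] sum.delta cong: if_cong)
  qed
  define z where "z = (\<chi> j. G$j$i - Q j * G$i$i)"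
  have "z = 0"
  proof (rule max_principle[OF mu_pos A P_nonneg P_sub, of "{i}"])
    show "\<forall>j\<in>{i}. z$j = 0" using Qi by (simp add: z_def)
    show "\<forall>j. j \<notin> {i} \<longrightarrow> z $ j = (\<Sum>k\<in>UNIV. P $ j $ k * z $ k)"
    proof (intro allI impI)
      fix j assume "j \<notin> {i}"
      then have ji: "j \<noteq> i" by simp
      have "z$j = (\<Sum>k\<in>UNIV. P$j$k * G$k$i) - (\<Sum>k\<in>UNIV. P$j$k * Q k) * G$i$i"
      proof -
        have g: "G$j$i = (\<Sum>k\<in>UNIV. P$j$k * G$k$i)" using Grow[of j i] ji by simp
        have "z$j = G$j$i - Q j * G$i$i" by (simp add: z_def)
        then show ?thesis by (subst (asm) g, subst (asm) Qh[OF ji]) 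
      qed
      also have "\<dots> = (\<Sum>k\<in>UNIV. P $ j $ k * z $ k)"
        by (simp add: z_def right_diff_distrib sum_subtractf sum_distrib_right mult.assoc)
      finally show "z $ j = (\<Sum>k\<in>UNIV. P $ j $ k * z $ k)" .
    qed
  qed
  then have GQ: "G$j$i = Q j * G$i$i" for j
  proof -
    assume "z = 0"
    then have "z$j = 0" by simp
    then have "G$j$i - Q j * G$i$i = 0" unfolding z_def by (simp only: vec_lambda_beta)
    then show ?thesis by linarith
  qed
  define r where "r = (\<Sum>k\<in>UNIV. P$i$k * Q k)"
  have Gii: "G$i$i * (1 - r) = 1"
  proof -
    have "(\<Sum>k\<in>UNIV. P$i$k * G$k$i) = (\<Sum>k\<in>UNIV. P$i$k * (Q k * G$i$i))"
      by (rule sum.cong) (simp_all only: GQ[symmetric])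
    then have "G$i$i - (\<Sum>k\<in>UNIV. P$i$k * (Q k * G$i$i)) = 1" using Grow[of i i] by simp
    moreover have "(\<Sum>k\<in>UNIV. P$i$k * (Q k * G$i$i)) = G$i$i * r"
      unfolding r_def sum_distrib_left by (rule sum.cong) (simp_all add: mult_ac)
    ultimately show ?thesis by (simp add: right_diff_distrib)
  qed
  then have Gnz: "G$i$i \<noteq> 0" by auto
  have nuG: "nu$i = (\<Sum>j\<in>UNIV. lam$j * G$j$i)"
  proof -
    have lj: "lam$j = nu$j - (\<Sum>m\<in>UNIV. nu$m * P$m$j)" for j
      using nu unfolding traffic_def by (metis add_diff_cancel_right')
    have "(\<Sum>j\<in>UNIV. lam$j * G$j$i)
        = (\<Sum>j\<in>UNIV. nu$j * G$j$i) - (\<Sum>j\<in>UNIV. \<Sum>m\<in>UNIV. nu$m * P$m$j * G$j$i)"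
      by (simp add: lj left_diff_distrib sum_subtractf sum_distrib_right)
    also have "\<dots> = (\<Sum>m\<in>UNIV. nu$m * (G$m$i - (\<Sum>j\<in>UNIV. P$m$j * G$j$i)))"
      by (subst sum.swap) (simp add: right_diff_distrib sum_subtractf sum_distrib_left mult.assoc)
    also have "\<dots> = nu$i" by (simp add: Grow if_distrib[of "\<lambda>x. _ * x"] sum.delta cong: if_cong)
    finally show ?thesis by (rule sym)
  qed
  have nuQ: "nu$i = G$i$i * (\<Sum>j\<in>UNIV. lam$j * Q j)"
  proof -
    have "nu$i = (\<Sum>j\<in>UNIV. lam$j * (Q j * G$i$i))" unfolding nuG
      by (rule sum.cong) (simp_all only: GQ[symmetric])
    also have "\<dots> = G$i$i * (\<Sum>j\<in>UNIV. lam$j * Q j)"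
      unfolding sum_distrib_left by (rule sum.cong) auto
    finally show ?thesis .
  qed
  have trm: "mu$j * ((\<Sum>k\<in>UNIV. P$j$k * exp (al$k - al$j)) + p0 P j * exp (- al$j) - 1)
      = (if j = i then mu$i * (s * (r - 1) / (1 + s)) else 0)" for j
  proof -
    have Ej: "exp (al$j) > 0" by simp
    have "(\<Sum>k\<in>UNIV. P$j$k * exp (al$k - al$j)) + p0 P j * exp (- al$j) - 1
        = ((\<Sum>k\<in>UNIV. P$j$k * exp (al$k)) + p0 P j - exp (al$j)) / exp (al$j)"
    proof -
      have "(\<Sum>k\<in>UNIV. P$j$k * exp (al$k - al$j)) = (\<Sum>k\<in>UNIV. P$j$k * exp (al$k)) / exp (al$j)"
        by (simp add: exp_diff sum_divide_distrib)
      then show ?thesis using Ej by (simp add: exp_minus divide_simps)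
    qed
    also have "\<dots> = s * ((\<Sum>k\<in>UNIV. P$j$k * Q k) - Q j) / (1 + Q j * s)"
      unfolding E using sumE[of j] by (simp add: algebra_simps)
    finally have X: "(\<Sum>k\<in>UNIV. P$j$k * exp (al$k - al$j)) + p0 P j * exp (- al$j) - 1
        = s * ((\<Sum>k\<in>UNIV. P$j$k * Q k) - Q j) / (1 + Q j * s)" .
    show ?thesis
    proof (cases "j = i")
      case True then show ?thesis using X Qi by (simp add: r_def)
    next
      case False
      have "(\<Sum>k\<in>UNIV. P$j$k * Q k) - Q j = 0" using Qh[OF False] by linarith
      then show ?thesis using X False by simp
    qed
  qed
  have part2: "RLam lam mu P Lam al = s / G$i$i * (nu$i - mu$i / (1 + s) * indicator Lam i)" for Lam
  proof -
    have "RLam lam mu P Lam al = s * (\<Sum>j\<in>UNIV. lam$j * Q j)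
        + (\<Sum>j\<in>Lam. (if j = i then mu$i * (s * (r - 1) / (1 + s)) else 0))"
      unfolding RLam_def trm using E
      by (simp add: sum_distrib_left mult_ac)
    also have "\<dots> = s * (\<Sum>j\<in>UNIV. lam$j * Q j) + indicator Lam i * (mu$i * (s * (r - 1) / (1 + s)))"
      by (simp add: sum.delta indicator_def)
    also have "\<dots> = s / G$i$i * (nu$i - mu$i / (1 + s) * indicator Lam i)"
    proof -
      have r1: "r - 1 = - 1 / G$i$i" using Gii Gnz by (simp add: field_simps)
      have "1 + s \<noteq> 0" using s by simp
      then have "G$i$i * (1 + s) \<noteq> 0" using Gnz by simp
      then have "G$i$i + s * G$i$i \<noteq> 0" by (simp add: algebra_simps)
      then show ?thesis using Gnz \<open>1 + s \<noteq> 0\<close> unfolding nuQ r1 by (simp add: field_simps)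
    qed
    finally show ?thesis .
  qed
  show ?thesis using part1 part2 unfolding al_def G_def by blast
qed

end
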